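(* Fix a constant $\Delta\ge 1$. There exists a canonical routing labeling scheme for the family of rooted trees on $n$ nodes in which every node has at most $\Delta$ children, such that every label has length $\log n+\mathcal{O}(\log\log n)$ bits. The constant in the $\mathcal{O}(\cdot)$ may depend on $\Delta$.
   Context: All logarithms are base $2$. A (designer-port) routing labeling scheme for a family $\mathcal{T}$ of rooted trees consists of an encoder and a decoder. - The encoder is given $T\in\mathcal{T}$. It assigns a binary string (label) $\ell(u)$ to every node $u$. It also labels the edges from each node $u$ to its $\deg(u)$ children with distinct port numbers from $\{1,\dots,\deg(u)\}$; the encoder is free to choose these port numbers. - The decoder receives only $\ell(u)$ and $\ell(w)$ for nodes $u\neq w$ of some $T\in\mathcal{T}$; the value $\lceil\log n\rceil$, where $n=|T|$, may also be assumed known. It must return $0$ if the next node on the path from $u$ to $w$ is the parent of $u$. Otherwise it must return the port number of the first edge on that path. - The length of the scheme is the maximum label length over all trees in $\mathcal{T}$ and all their nodes. A port assignment is canonical if, for every node $v$ with children $v_1,\dots,v_i$ ordered so that $|T_{v_1}|\ge\dots\ge|T_{v_i}|$, the edge from $v$ to $v_j$ gets port $j$. Here $T_v$ denotes the subtree rooted at $v$; ties may be broken arbitrarily. A scheme is canonical if its encoder always produces a canonical port assignment. *)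

theory Defs
  imports Complex_Main "HOL-Library.Sublist"
begin

text \<open>A node is identified by its position: the list of child indices
  on the path from the root. The list order of children carries no meaning for the
  scheme (port numbers are chosen freely by the encoder).\<close>

datatype rtree = Node "rtree list"

fun children :: "rtree \<Rightarrow> rtree list" where
  "children (Node ts) = ts"

fun valid_pos :: "rtree \<Rightarrow> nat list \<Rightarrow> bool" where
  "valid_pos t [] = True"
| "valid_pos (Node ts) (i # p) = (i < length ts \<and> valid_pos (ts ! i) p)"

fun subtree_at :: "rtree \<Rightarrow> nat list \<Rightarrow> rtree" where
  "subtree_at t [] = t"
| "subtree_at (Node ts) (i # p) = subtree_at (ts ! i) p"

definition nodes :: "rtree \<Rightarrow> nat list set" where
  "nodes t = {p. valid_pos t p}"

definition tsize :: "rtree \<Rightarrow> nat" where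
  "tsize t = card (nodes t)"

definition deg :: "rtree \<Rightarrow> nat list \<Rightarrow> nat" where
  "deg t u = length (children (subtree_at t u))"

definition bounded_deg :: "nat \<Rightarrow> rtree \<Rightarrow> bool" where
  "bounded_deg \<Delta> t \<longleftrightarrow> (\<forall>u \<in> nodes t. deg t u \<le> \<Delta>)"

text \<open>A port assignment: \<open>port u i\<close> is the port number of the edge from node \<open>u\<close>
  to its child \<open>u @ [i]\<close>; the ports at \<open>u\<close> are distinct numbers in \<open>{1..deg u}\<close>.\<close>
definition port_assignment :: "rtree \<Rightarrow> (nat list \<Rightarrow> nat \<Rightarrow> nat) \<Rightarrow> bool" where
  "port_assignment t port \<longleftrightarrow>
     (\<forall>u \<in> nodes t. bij_betw (port u) {..<deg t u} {1..deg t u})"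

definition canonical_ports :: "rtree \<Rightarrow> (nat list \<Rightarrow> nat \<Rightarrow> nat) \<Rightarrow> bool" where
  "canonical_ports t port \<longleftrightarrow> port_assignment t port \<and>
     (\<forall>u \<in> nodes t. \<forall>i < deg t u. \<forall>j < deg t u.
        port u i < port u j \<longrightarrow>
          tsize (subtree_at t (u @ [j])) \<le> tsize (subtree_at t (u @ [i])))"

text \<open>The correct routing answer: 0 if the next node from \<open>u\<close> towards \<open>w\<close> is the
  parent of \<open>u\<close>, otherwise the port of the first edge (towards a child of \<open>u\<close>).\<close>
definition route :: "(nat list \<Rightarrow> nat \<Rightarrow> nat) \<Rightarrow> nat list \<Rightarrow> nat list \<Rightarrow> nat" where
  "route port u w = (if strict_prefix u w then port u (w ! length u) else 0)"

text \<open>A scheme: the encoder maps a tree to (labels, port assignment); the decoder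
  gets \<open>\<lceil>log n\<rceil>\<close> and the two labels.\<close>
type_synonym encoder = "rtree \<Rightarrow> (nat list \<Rightarrow> bool list) \<times> (nat list \<Rightarrow> nat \<Rightarrow> nat)"
type_synonym decoder = "nat \<Rightarrow> bool list \<Rightarrow> bool list \<Rightarrow> nat"

definition correct_on :: "encoder \<Rightarrow> decoder \<Rightarrow> rtree \<Rightarrow> bool" where
  "correct_on enc dec t \<longleftrightarrow>
     (let lab = fst (enc t); port = snd (enc t) in
        canonical_ports t port \<and>
        (\<forall>u \<in> nodes t. \<forall>w \<in> nodes t. u \<noteq> w \<longrightarrow>
           dec (nat \<lceil>log 2 (real (tsize t))\<rceil>) (lab u) (lab w) = route port u w))"

end

theory Submission
  imports Defs
begin


fun tsz :: "rtree \<Rightarrow> nat" where "tsz (Node ts) = Suc (sum_list (map tsz ts))"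

lemma nodes_Node: "nodes (Node ts) = insert [] (\<Union>i<length ts. (\<lambda>p. i # p) ` nodes (ts!i))"
  unfolding nodes_def
  apply (rule set_eqI)
  subgoal for x by (cases x) auto
  done

lemma finite_nodes: "finite (nodes t)"
proof (induction t)
  case (Node ts)
  show ?case unfolding nodes_Node using Node by auto
qed

lemma tsize_tsz: "tsize t = tsz t"
proof (induction t)
  case (Node ts)
  have fin: "\<And>i. finite ((\<lambda>p. i # p) ` nodes (ts!i))" using finite_nodes by auto
  have "card (\<Union>i<length ts. (\<lambda>p. i # p) ` nodes (ts!i)) = (\<Sum>i<length ts. card ((\<lambda>p. i # p) ` nodes (ts!i)))"
    by (rule card_UN_disjoint) (auto simp: fin)
  also have "\<dots> = (\<Sum>i<length ts. tsz (ts!i))"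
    by (rule sum.cong) (auto simp: card_image inj_on_def tsize_def[symmetric] Node)
  also have "\<dots> = sum_list (map tsz ts)"
    by (simp add: sum_list_sum_nth atLeast0LessThan)
  finally show ?case unfolding tsize_def nodes_Node
    by (subst card_insert_disjoint) (auto simp: fin)
qed

lemma valid_pos_append: "valid_pos t (u @ v) = (valid_pos t u \<and> valid_pos (subtree_at t u) v)"
  by (induction t u rule: valid_pos.induct) auto

lemma subtree_at_append: "subtree_at t (u @ v) = subtree_at (subtree_at t u) v"
  by (induction t u rule: subtree_at.induct) auto



function rnd :: "nat \<Rightarrow> nat \<Rightarrow> nat \<times> nat" where
  "rnd p x = (if x \<le> 2^p then (0, x) else (let r = rnd p ((x+1) div 2) in (Suc (fst r), snd r)))"
  by auto
termination
  apply (relation "measure (\<lambda>(p,x). x)")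
  apply auto
  subgoal for p x
    using one_le_power[of "2::nat" p] by presburger
  done

declare rnd.simps[simp del]

lemma rnd_props:
  "snd (rnd p x) \<le> 2^p \<and> x \<le> snd (rnd p x) * 2^fst (rnd p x) \<and>
   snd (rnd p x) * 2^fst (rnd p x) + 1 \<le> x + 2^fst (rnd p x) \<and>
   (0 < fst (rnd p x) \<longrightarrow> 2^(p + fst (rnd p x) - 1) < x)"
proof (induction x rule: less_induct)
  case (less x)
  show ?case
  proof (cases "x \<le> 2^p")
    case True then show ?thesis by (simp add: rnd.simps)
  next
    case False
    define y where "y = (x+1) div 2"
    have y: "y < x" using False one_le_power[of "2::nat" p] unfolding y_def by presburger
    define e where "e = fst (rnd p y)"
    define M where "M = snd (rnd p y)"
    have IH: "M \<le> 2^p \<and> y \<le> M * 2^e \<and> M * 2^e + 1 \<le> y + 2^e \<and> (0 < e \<longrightarrow> 2^(p + e - 1) < y)"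
      using less[OF y] unfolding e_def M_def .
    have rx: "rnd p x = (Suc e, M)" using False unfolding e_def M_def y_def by (simp add: rnd.simps[of p x] Let_def)
    have y2: "x \<le> 2 * y" "2 * y \<le> x + 1" unfolding y_def by presburger+
    have a2: "x \<le> M * 2^Suc e" using IH y2 by simp
    have a3: "M * 2^Suc e + 1 \<le> x + 2^Suc e" using IH y2 by simp
    have a4: "2^(p + Suc e - 1) < x"
    proof (cases "e = 0")
      case True then show ?thesis using False by simp
    next
      case e0: False
      then have h: "2^(p+e-1) < y" using IH by simp
      have "(2::nat)^(p + Suc e - 1) = 2 * 2^(p+e-1)" using e0
        by (cases e) auto
      then show ?thesis using h y2 by linarith
    qed
    show ?thesis using rx IH a2 a3 a4 by simp
  qed
qed

definition SL :: "nat \<Rightarrow> nat \<Rightarrow> nat" where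
  "SL p x = (snd (rnd p x) + 1) * 2^fst (rnd p x) - 1"

lemma SL_ge: "x \<le> SL p x"
proof -
  define P :: nat where "P = 2^fst (rnd p x)"
  define M where "M = snd (rnd p x)"
  have "x \<le> M * P" using rnd_props[of p x] unfolding P_def M_def by simp
  moreover have "1 \<le> P" unfolding P_def by simp
  moreover have "(M+1)*P = M*P + P" by simp
  ultimately have "x \<le> (M+1)*P - 1" by linarith
  thus ?thesis unfolding SL_def P_def M_def .
qed

lemma align_props:
  fixes a e :: nat
  shows "a \<le> (a + 2^e - 1) div 2^e * 2^e \<and> (a + 2^e - 1) div 2^e * 2^e \<le> a + 2^e - 1
     \<and> ((a + 2^e - 1) div 2^e * 2^e) mod 2^e = 0"
proof -
  define P :: nat where "P = 2^e"
  have p: "1 \<le> P" unfolding P_def by simp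
  define q where "q = (a + P - 1) div P"
  define r where "r = (a + P - 1) mod P"
  have "q * P + r = a + P - 1" unfolding q_def r_def by (rule div_mult_mod_eq)
  moreover have "r < P" using p unfolding r_def by simp
  ultimately have "a \<le> q * P \<and> q * P \<le> a + P - 1" using p by linarith
  thus ?thesis unfolding P_def[symmetric] q_def[symmetric] by simp
qed

fun idx :: "nat list \<Rightarrow> nat \<Rightarrow> nat" where
  "idx [] x = 0"
| "idx (y # ys) x = (if y = x then 0 else Suc (idx ys x))"

lemma idx_nth: "x \<in> set xs \<Longrightarrow> idx xs x < length xs \<and> xs ! idx xs x = x"
  by (induction xs) auto

lemma idx_of_nth: "distinct xs \<Longrightarrow> j < length xs \<Longrightarrow> idx xs (xs ! j) = j"
  by (induction xs arbitrary: j) (auto simp: nth_Cons split: nat.splits)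

definition ord :: "rtree list \<Rightarrow> nat list" where
  "ord ts = sort_key (\<lambda>i. - int (tsz (ts!i))) [0..<length ts]"

lemma ord_set: "set (ord ts) = {..<length ts}" by (auto simp: ord_def)
lemma ord_distinct: "distinct (ord ts)" by (simp add: ord_def)
lemma ord_length: "length (ord ts) = length ts" by (simp add: ord_def)
lemma ord_sorted: "a \<le> b \<Longrightarrow> b < length ts \<Longrightarrow> tsz (ts ! (ord ts ! b)) \<le> tsz (ts ! (ord ts ! a))"
proof -
  assume ab: "a \<le> b" "b < length ts"
  have "sorted (map (\<lambda>i. - int (tsz (ts!i))) (ord ts))" by (simp add: ord_def)
  hence "map (\<lambda>i. - int (tsz (ts!i))) (ord ts) ! a \<le> map (\<lambda>i. - int (tsz (ts!i))) (ord ts) ! b"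
    using ab by (intro sorted_nth_mono) (auto simp: ord_length)
  thus ?thesis using ab by (simp add: ord_length)
qed

fun A :: "nat \<Rightarrow> rtree \<Rightarrow> nat" where
  "A p (Node ts) = (let as = map (A p) ts in
     if ts = [] then 1 else 1 + sum_list (map (\<lambda>i. SL p (as!i)) (tl (ord ts))) + as ! hd (ord ts))"

lemma A_pos: "1 \<le> A p t" by (cases t) (simp add: Let_def)



definition heavy :: "rtree list \<Rightarrow> nat" where "heavy ts = hd (ord ts)"
definition lights :: "rtree list \<Rightarrow> nat list" where "lights ts = tl (ord ts)"
definition Ss :: "nat \<Rightarrow> rtree list \<Rightarrow> nat list" where
  "Ss p ts = map (\<lambda>j. SL p (A p (ts!j))) (lights ts)"
definition align :: "nat \<Rightarrow> nat \<Rightarrow> nat" where "align a e = (a + 2^e - 1) div 2^e * 2^e"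
definition slotstart :: "nat \<Rightarrow> nat \<Rightarrow> rtree list \<Rightarrow> nat \<Rightarrow> nat" where
  "slotstart p s ts j = s + 1 + sum_list (take j (Ss p ts))"
definition cstart :: "nat \<Rightarrow> nat \<Rightarrow> rtree list \<Rightarrow> nat \<Rightarrow> nat" where
  "cstart p s ts i = (if i = heavy ts then s + 1 + sum_list (Ss p ts)
     else align (slotstart p s ts (idx (lights ts) i)) (fst (rnd p (A p (ts!i)))))"
definition cst :: "nat \<Rightarrow> nat \<times> nat \<times> nat \<Rightarrow> rtree list \<Rightarrow> nat \<Rightarrow> nat \<times> nat \<times> nat" where
  "cst p st ts i = (let c = cstart p (fst st) ts i in
     if i = heavy ts then (c, snd st)
     else (c, fst (rnd p (A p (ts!i))), c + snd (rnd p (A p (ts!i))) * 2^fst (rnd p (A p (ts!i)))))"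

fun walk :: "nat \<Rightarrow> nat \<times> nat \<times> nat \<Rightarrow> rtree \<Rightarrow> nat list \<Rightarrow> nat \<times> nat \<times> nat" where
  "walk p st t [] = st"
| "walk p st (Node ts) (i # u) = walk p (cst p st ts i) (ts!i) u"

lemma ord_cons: "ts \<noteq> [] \<Longrightarrow> ord ts = heavy ts # lights ts"
  unfolding heavy_def lights_def using ord_length[of ts] by (cases "ord ts") auto

lemma A_Node: "ts \<noteq> [] \<Longrightarrow> A p (Node ts) = 1 + sum_list (Ss p ts) + A p (ts ! heavy ts)"
proof -
  assume ne: "ts \<noteq> []"
  have b: "\<And>i. i \<in> set (ord ts) \<Longrightarrow> i < length ts" using ord_set by auto
  have h: "hd (ord ts) \<in> set (ord ts)" using ne ord_length[of ts] by (intro hd_in_set) auto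
  have t: "\<And>i. i \<in> set (tl (ord ts)) \<Longrightarrow> i < length ts" using b by (metis list.set_sel(2) tl_Nil empty_iff list.set(1))
  have e: "sum_list (map (\<lambda>i. SL p (map (A p) ts ! i)) (tl (ord ts))) = sum_list (map (\<lambda>j. SL p (A p (ts!j))) (tl (ord ts)))"
    using t by (intro arg_cong[where f=sum_list] map_cong) auto
  have "A p (Node ts) = 1 + sum_list (map (\<lambda>i. SL p (map (A p) ts ! i)) (tl (ord ts))) + map (A p) ts ! hd (ord ts)"
    using ne by (simp only: A.simps Let_def if_False)
  also have "\<dots> = 1 + sum_list (Ss p ts) + A p (ts ! heavy ts)"
    unfolding e Ss_def heavy_def lights_def using b[OF h] by simp
  finally show ?thesis .
qed

declare A.simps[simp del]

lemma heavy_lt: "ts \<noteq> [] \<Longrightarrow> heavy ts < length ts"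
  using ord_set[of ts] ord_cons[of ts] by (metis lessThan_iff list.set_intros(1))

lemma lights_set: "ts \<noteq> [] \<Longrightarrow> set (lights ts) = {..<length ts} - {heavy ts}"
  using ord_set[of ts] ord_cons[of ts] ord_distinct[of ts] by (metis distinct.simps(2) list.simps(15) Diff_insert_absorb)

lemma lights_distinct: "distinct (lights ts)"
  using ord_distinct[of ts] unfolding lights_def by (simp add: distinct_tl)

lemma length_Ss: "length (Ss p ts) = length (lights ts)" by (simp add: Ss_def)

lemma light_idx:
  assumes "i < length ts" "i \<noteq> heavy ts"
  shows "idx (lights ts) i < length (lights ts) \<and> lights ts ! idx (lights ts) i = i"
proof -
  have "ts \<noteq> []" using assms by auto
  hence "i \<in> set (lights ts)" using assms lights_set by auto
  thus ?thesis using idx_nth by blast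
qed

lemma sum_take_mono: "m \<le> n \<Longrightarrow> sum_list (take m (xs::nat list)) \<le> sum_list (take n xs)"
proof -
  assume "m \<le> n"
  then have "take n xs = take m xs @ take (n - m) (drop m xs)"
    by (metis le_add_diff_inverse take_add)
  thus ?thesis by simp
qed

lemma sum_take_le: "sum_list (take m (xs::nat list)) \<le> sum_list xs"
  by (metis append_take_drop_id le_add1 sum_list_append)

lemma sum_take_Suc: "j < length xs \<Longrightarrow> sum_list (take (Suc j) (xs::nat list)) = sum_list (take j xs) + xs ! j"
  by (simp add: take_Suc_conv_app_nth)

lemma align_slot:
  fixes a x p :: nat
  defines "e \<equiv> fst (rnd p x)" and "M \<equiv> snd (rnd p x)"
  shows "a \<le> align a e \<and> align a e + M * 2^e \<le> a + SL p x \<and> x \<le> M * 2^e \<and> align a e mod 2^e = 0"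
proof -
  have al: "a \<le> align a e \<and> align a e \<le> a + 2^e - 1 \<and> align a e mod 2^e = 0"
    using align_props[of a e] unfolding align_def by simp
  have r: "x \<le> M * 2^e" using rnd_props[of p x] unfolding e_def M_def by simp
  have sl: "SL p x = (M+1) * 2^e - 1" unfolding SL_def e_def M_def by simp
  have "(1::nat) \<le> 2^e" by simp
  moreover have "(M+1) * 2^e = M * 2^e + 2^e" by simp
  ultimately show ?thesis using al r sl by linarith
qed

lemma light_child:
  assumes "i < length ts" "i \<noteq> heavy ts"
  defines "jj \<equiv> idx (lights ts) i"
  shows "slotstart p s ts jj \<le> cstart p s ts i
    \<and> snd (snd (cst p (s,e,E) ts i)) \<le> slotstart p s ts (Suc jj)
    \<and> cstart p s ts i + A p (ts!i) \<le> snd (snd (cst p (s,e,E) ts i))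
    \<and> fst (cst p (s,e,E) ts i) = cstart p s ts i
    \<and> jj < length (lights ts) \<and> lights ts ! jj = i"
proof -
  have li: "jj < length (lights ts) \<and> lights ts ! jj = i" using light_idx[OF assms(1,2)] jj_def by simp
  have ss: "slotstart p s ts (Suc jj) = slotstart p s ts jj + SL p (A p (ts!i))"
    using li unfolding slotstart_def by (simp add: sum_take_Suc length_Ss Ss_def)
  show ?thesis using align_slot[of "slotstart p s ts jj" p "A p (ts!i)"] li ss assms(2)
    unfolding cst_def cstart_def jj_def by (simp add: Let_def)
qed

lemma heavy_child:
  assumes "ts \<noteq> []"
  shows "cst p (s,e,E) ts (heavy ts) = (s + 1 + sum_list (Ss p ts), e, E)
    \<and> cstart p s ts (heavy ts) = s + 1 + sum_list (Ss p ts)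
    \<and> cstart p s ts (heavy ts) + A p (ts ! heavy ts) = s + A p (Node ts)"
  using assms by (simp add: cst_def cstart_def A_Node)

lemma slot_le: "j \<le> length (lights ts) \<Longrightarrow> slotstart p s ts j \<le> s + 1 + sum_list (Ss p ts)"
  unfolding slotstart_def using sum_take_le by simp

lemma slot_mono: "j \<le> j' \<Longrightarrow> slotstart p s ts j \<le> slotstart p s ts j'"
  unfolding slotstart_def using sum_take_mono by simp

lemma child_bounds:
  assumes "i < length ts"
  shows "s < cstart p s ts i \<and> cstart p s ts i + A p (ts!i) \<le> s + A p (Node ts)"
proof -
  have ne: "ts \<noteq> []" using assms by auto
  show ?thesis
  proof (cases "i = heavy ts")
    case True then show ?thesis using heavy_child[OF ne, of p s] A_Node[OF ne, of p] by simp
  next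
    case False
    note lc = light_child[OF assms False, of p s 0 0]
    have "slotstart p s ts (Suc (idx (lights ts) i)) \<le> s + 1 + sum_list (Ss p ts)"
      using lc by (intro slot_le) simp
    moreover have "s < slotstart p s ts (idx (lights ts) i)" unfolding slotstart_def by simp
    ultimately show ?thesis using lc A_Node[OF ne, of p] by linarith
  qed
qed

lemma cst_fst: "fst (cst p (s,e,E) ts i) = cstart p s ts i"
  by (simp add: cst_def Let_def)

lemma region:
  "valid_pos t u \<Longrightarrow> s \<le> fst (walk p (s,e,E) t u) \<and> fst (walk p (s,e,E) t u) < s + A p t
    \<and> (u \<noteq> [] \<longrightarrow> s < fst (walk p (s,e,E) t u))"
proof (induction u arbitrary: t s e E)
  case Nil then show ?case using A_pos[of p t] by simp
next
  case (Cons i u)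
  obtain ts where t: "t = Node ts" by (cases t)
  have i: "i < length ts" and v: "valid_pos (ts!i) u" using Cons.prems t by auto
  obtain s' e' E' where c: "cst p (s,e,E) ts i = (s',e',E')" by (metis prod.collapse)
  have s': "s' = cstart p s ts i" using cst_fst[of p s e E ts i] c by simp
  have "s' \<le> fst (walk p (s',e',E') (ts!i) u) \<and> fst (walk p (s',e',E') (ts!i) u) < s' + A p (ts!i)"
    using Cons.IH[OF v] by blast
  then show ?case using child_bounds[OF i, of s p] s' c t by auto
qed



lemma cst_inv:
  assumes i: "i < length ts" and inv: "s + A p (Node ts) \<le> E"
    and c: "cst p (s,e,E) ts i = (s',e',E')"
  shows "s' + A p (ts!i) \<le> E' \<and> E' \<le> E \<and> s < s' \<and> s' = cstart p s ts i"
proof -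
  have ne: "ts \<noteq> []" using i by auto
  have s': "s' = cstart p s ts i" using cst_fst[of p s e E ts i] c by simp
  show ?thesis
  proof (cases "i = heavy ts")
    case True then show ?thesis using heavy_child[OF ne, of p s e E] c inv child_bounds[OF i, of s p] s' by simp
  next
    case False
    note lc = light_child[OF i False, of p s e E]
    have "slotstart p s ts (Suc (idx (lights ts) i)) \<le> s + 1 + sum_list (Ss p ts)"
      using lc by (intro slot_le) simp
    then show ?thesis using lc c inv A_Node[OF ne, of p] child_bounds[OF i, of s p] s' by simp
  qed
qed

lemma walk_inv:
  "valid_pos t u \<Longrightarrow> s + A p t \<le> E \<Longrightarrow>
    fst (walk p (s,e,E) t u) + A p (subtree_at t u) \<le> snd (snd (walk p (s,e,E) t u))
    \<and> snd (snd (walk p (s,e,E) t u)) \<le> E"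
proof (induction u arbitrary: t s e E)
  case Nil then show ?case by simp
next
  case (Cons i u)
  obtain ts where t: "t = Node ts" by (cases t)
  have i: "i < length ts" and v: "valid_pos (ts!i) u" using Cons.prems t by auto
  obtain s' e' E' where c: "cst p (s,e,E) ts i = (s',e',E')" by (metis prod.collapse)
  have h: "s' + A p (ts!i) \<le> E' \<and> E' \<le> E" using cst_inv[OF i _ c] Cons.prems t by simp
  show ?case using Cons.IH[OF v, of s' E' e'] h t c by simp
qed

lemma child_zone:
  assumes i: "i < length ts" and inv: "s + A p (Node ts) \<le> E"
    and c: "cst p (s,e,E) ts i = (s',e',E')"
    and w: "valid_pos (Node ts) w"
    and z: "s' \<le> fst (walk p (s,e,E) (Node ts) w)" "fst (walk p (s,e,E) (Node ts) w) < E'"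
  shows "\<exists>w'. w = i # w'"
proof (cases w)
  case Nil
  then show ?thesis using z cst_inv[OF i inv c] by simp
next
  case (Cons j w')
  have ne: "ts \<noteq> []" using i by auto
  have j: "j < length ts" and vw: "valid_pos (ts!j) w'" using w Cons by auto
  obtain s2 e2 E2 where c2: "cst p (s,e,E) ts j = (s2,e2,E2)" by (metis prod.collapse)
  have s2: "s2 = cstart p s ts j" using cst_inv[OF j inv c2] by simp
  have pw: "fst (walk p (s,e,E) (Node ts) w) = fst (walk p (s2,e2,E2) (ts!j) w')" using Cons c2 by simp
  have rg: "cstart p s ts j \<le> fst (walk p (s,e,E) (Node ts) w) \<and> fst (walk p (s,e,E) (Node ts) w) < cstart p s ts j + A p (ts!j)"
    using region[OF vw, of s2 p e2 E2] pw s2 by simp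
  have s'i: "s' = cstart p s ts i" using cst_inv[OF i inv c] by simp
  show ?thesis
  proof (rule ccontr)
    assume "\<nexists>w'. w = i # w'"
    hence ji: "j \<noteq> i" using Cons by simp
    show False
    proof (cases "i = heavy ts")
      case True
      hence jl: "j \<noteq> heavy ts" using ji by simp
      note lc = light_child[OF j jl, of p s e E]
      have "slotstart p s ts (Suc (idx (lights ts) j)) \<le> s + 1 + sum_list (Ss p ts)"
        using lc by (intro slot_le) simp
      moreover have "s' = s + 1 + sum_list (Ss p ts)" using s'i True heavy_child[OF ne] by simp
      ultimately show False using lc rg z by linarith
    next
      case False
      note lci = light_child[OF i False, of p s e E]
      have E': "E' = snd (snd (cst p (s,e,E) ts i))" using c by simp
      show False
      proof (cases "j = heavy ts")
        case True
        have "slotstart p s ts (Suc (idx (lights ts) i)) \<le> s + 1 + sum_list (Ss p ts)"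
          using lci by (intro slot_le) simp
        moreover have "cstart p s ts j = s + 1 + sum_list (Ss p ts)" using True heavy_child[OF ne] by simp
        ultimately show False using lci rg z E' by linarith
      next
        case jl: False
        note lcj = light_child[OF j jl, of p s e E]
        have "idx (lights ts) i \<noteq> idx (lights ts) j" using lci lcj ji by metis
        then consider "idx (lights ts) i < idx (lights ts) j" | "idx (lights ts) j < idx (lights ts) i" by linarith
        then show False
        proof cases
          case 1
          hence "slotstart p s ts (Suc (idx (lights ts) i)) \<le> slotstart p s ts (idx (lights ts) j)"
            by (intro slot_mono) simp
          then show False using lci lcj rg z E' by linarith
        next
          case 2
          hence "slotstart p s ts (Suc (idx (lights ts) j)) \<le> slotstart p s ts (idx (lights ts) i)"
            by (intro slot_mono) simp
          then show False using lci lcj rg z E' s'i by linarith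
        qed
      qed
    qed
  qed
qed

lemma zone:
  "valid_pos t u \<Longrightarrow> valid_pos t w \<Longrightarrow> s + A p t \<le> E \<Longrightarrow>
   fst (walk p (s,e,E) t u) \<le> fst (walk p (s,e,E) t w) \<Longrightarrow>
   fst (walk p (s,e,E) t w) < snd (snd (walk p (s,e,E) t u)) \<Longrightarrow> prefix u w"
proof (induction u arbitrary: t s e E w)
  case Nil then show ?case by simp
next
  case (Cons i u)
  obtain ts where t: "t = Node ts" by (cases t)
  have i: "i < length ts" and v: "valid_pos (ts!i) u" using Cons.prems t by auto
  obtain s' e' E' where c: "cst p (s,e,E) ts i = (s',e',E')" by (metis prod.collapse)
  have ci: "s' + A p (ts!i) \<le> E' \<and> E' \<le> E \<and> s < s' \<and> s' = cstart p s ts i"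
    using cst_inv[OF i _ c] Cons.prems t by simp
  have wu: "walk p (s,e,E) t (i#u) = walk p (s',e',E') (ts!i) u" using t c by simp
  have r1: "s' \<le> fst (walk p (s',e',E') (ts!i) u)" using region[OF v] by blast
  have r2: "snd (snd (walk p (s',e',E') (ts!i) u)) \<le> E'" using walk_inv[OF v, of s' p E' e'] ci by simp
  have z: "s' \<le> fst (walk p (s,e,E) (Node ts) w)" "fst (walk p (s,e,E) (Node ts) w) < E'"
    using Cons.prems(4,5) wu r1 r2 t by auto
  obtain w' where w: "w = i # w'" using child_zone[OF i _ c _ z] Cons.prems t by blast
  have vw: "valid_pos (ts!i) w'" using Cons.prems(2) t w by simp
  have ww: "walk p (s,e,E) t w = walk p (s',e',E') (ts!i) w'" using t c w by simp
  have "prefix u w'" using Cons.IH[OF v vw, of s' E' e'] ci Cons.prems(4,5) wu ww by simp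
  then show ?case using w by simp
qed



lemma walk_inv2:
  "valid_pos t u \<Longrightarrow> s + A p t \<le> E \<Longrightarrow> E mod 2^e = 0 \<Longrightarrow> E \<le> s + 2^(p+e) \<Longrightarrow>
    snd (snd (walk p (s,e,E) t u)) mod 2^(fst (snd (walk p (s,e,E) t u))) = 0
    \<and> snd (snd (walk p (s,e,E) t u)) \<le> fst (walk p (s,e,E) t u) + 2^(p + fst (snd (walk p (s,e,E) t u)))"
proof (induction u arbitrary: t s e E)
  case Nil then show ?case by simp
next
  case (Cons i u)
  obtain ts where t: "t = Node ts" by (cases t)
  have i: "i < length ts" and v: "valid_pos (ts!i) u" using Cons.prems t by auto
  obtain s' e' E' where c: "cst p (s,e,E) ts i = (s',e',E')" by (metis prod.collapse)
  have ci: "s' + A p (ts!i) \<le> E' \<and> E' \<le> E \<and> s < s' \<and> s' = cstart p s ts i"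
    using cst_inv[OF i _ c] Cons.prems t by simp
  have "E' mod 2^e' = 0 \<and> E' \<le> s' + 2^(p+e')"
  proof (cases "i = heavy ts")
    case True
    then have "e' = e \<and> E' = E" using c by (simp add: cst_def Let_def)
    then show ?thesis using Cons.prems ci by simp
  next
    case False
    define x where "x = A p (ts!i)"
    have ee: "e' = fst (rnd p x) \<and> E' = s' + snd (rnd p x) * 2^fst (rnd p x)"
      using c False ci unfolding x_def by (auto simp: cst_def Let_def)
    have al: "s' mod 2^e' = 0" using False ci ee align_slot[of "slotstart p s ts (idx (lights ts) i)" p x]
      unfolding cstart_def x_def by simp
    have "snd (rnd p x) * 2^e' \<le> 2^p * 2^e'" using rnd_props[of p x] ee by simp
    then show ?thesis using al ee by (simp add: power_add)
  qed
  then show ?case using Cons.IH[OF v, of s' E' e'] ci t c by simp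
qed

lemma walk_append:
  "valid_pos t u \<Longrightarrow> walk p st t (u @ v) = walk p (walk p st t u) (subtree_at t u) v"
proof (induction u arbitrary: t st)
  case Nil then show ?case by simp
next
  case (Cons i u)
  obtain ts where t: "t = Node ts" by (cases t)
  then show ?case using Cons by simp
qed

fun bits :: "nat \<Rightarrow> nat \<Rightarrow> bool list" where
  "bits 0 x = []"
| "bits (Suc w) x = odd x # bits w (x div 2)"

fun unbits :: "bool list \<Rightarrow> nat" where
  "unbits [] = 0"
| "unbits (b # bs) = (if b then 1 else 0) + 2 * unbits bs"

lemma length_bits[simp]: "length (bits w x) = w" by (induction w arbitrary: x) auto

lemma unbits_bits: "unbits (bits w x) = x mod 2^w"
proof (induction w arbitrary: x)
  case 0 then show ?case by simp
next
  case (Suc w)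
  have "x mod 2^Suc w = 2 * (x div 2 mod 2^w) + x mod 2"
    using mod_mult2_eq[of x 2 "2^w"] by simp
  then show ?case using Suc by (auto simp: odd_iff_mod_2_eq_one)
qed

function bitlen :: "nat \<Rightarrow> nat" where
  "bitlen x = (if x = 0 then 0 else Suc (bitlen (x div 2)))"
  by auto
termination by (relation "measure id") auto

declare bitlen.simps[simp del]

lemma bitlen_lt: "x < 2^bitlen x"
proof (induction x rule: less_induct)
  case (less x)
  show ?case
  proof (cases "x = 0")
    case True then show ?thesis by (simp add: bitlen.simps)
  next
    case False
    then have "x div 2 < 2^bitlen (x div 2)" using less by simp
    then show ?thesis using False by (simp add: bitlen.simps[of x])
  qed
qed

lemma bitlen_le: "x < 2^b \<Longrightarrow> bitlen x \<le> b"
proof (induction x arbitrary: b rule: less_induct)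
  case (less x)
  show ?case
  proof (cases "x = 0")
    case True then show ?thesis by (simp add: bitlen.simps)
  next
    case False
    then obtain b' where b: "b = Suc b'" using less.prems by (cases b) auto
    then have "x div 2 < 2^b'" using less.prems by simp
    then have "bitlen (x div 2) \<le> b'" using less.IH False by simp
    then show ?thesis using False b by (simp add: bitlen.simps[of x])
  qed
qed

lemma unbits_bitlen: "unbits (bits (bitlen x) x) = x"
  using bitlen_lt[of x] by (simp add: unbits_bits)

definition gam :: "nat \<Rightarrow> bool list" where
  "gam x = replicate (bitlen x) True @ False # bits (bitlen x) x"

definition ungam :: "bool list \<Rightarrow> nat \<times> bool list" where
  "ungam bs = (let l = length (takeWhile id bs); r = drop (Suc l) bs in (unbits (take l r), drop l r))"

lemma tw_rep: "takeWhile id (replicate n True @ False # r) = replicate n True"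
  by (induction n) auto

lemma ungam_gam: "ungam (gam x @ r) = (x, r)"
proof -
  have tw: "takeWhile id (gam x @ r) = replicate (bitlen x) True"
    unfolding gam_def using tw_rep[of "bitlen x" "bits (bitlen x) x @ r"] by simp
  have d: "drop (Suc (bitlen x)) (gam x @ r) = bits (bitlen x) x @ r" by (simp add: gam_def)
  show ?thesis unfolding ungam_def Let_def tw length_replicate d by (simp add: unbits_bitlen)
qed

lemma length_gam: "length (gam x) = 2 * bitlen x + 1" by (simp add: gam_def)

definition encl :: "nat list \<Rightarrow> bool list" where
  "encl xs = gam (length xs) @ concat (map gam xs)"

fun decn :: "nat \<Rightarrow> bool list \<Rightarrow> nat list \<times> bool list" where
  "decn 0 bs = ([], bs)"
| "decn (Suc n) bs = (let xr = ungam bs; yr = decn n (snd xr) in (fst xr # fst yr, snd yr))"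

definition decl :: "bool list \<Rightarrow> nat list \<times> bool list" where
  "decl bs = (let nr = ungam bs in decn (fst nr) (snd nr))"

lemma decn_concat: "decn (length xs) (concat (map gam xs) @ r) = (xs, r)"
  by (induction xs) (auto simp: ungam_gam Let_def)

lemma decl_encl: "decl (encl xs @ r) = (xs, r)"
  unfolding decl_def encl_def by (simp add: ungam_gam decn_concat)

fun mkpairs :: "nat list \<Rightarrow> (nat \<times> nat) list" where
  "mkpairs (a # b # r) = (a, b) # mkpairs r"
| "mkpairs _ = []"

lemma mkpairs_concat: "mkpairs (concat (map (\<lambda>q. [fst q, snd q]) qs)) = qs"
  by (induction qs) auto

fun slotfind :: "nat \<Rightarrow> nat \<Rightarrow> nat list \<Rightarrow> nat \<Rightarrow> nat" where
  "slotfind x a [] k = 1"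
| "slotfind x a (S # Ls) k = (if x < a + S then k else slotfind x (a + S) Ls (Suc k))"

lemma slotfind_in:
  "jj < length Ls \<Longrightarrow> a + sum_list (take jj Ls) \<le> x \<Longrightarrow> x < a + sum_list (take (Suc jj) Ls)
   \<Longrightarrow> slotfind x a Ls k = k + jj"
proof (induction Ls arbitrary: a k jj)
  case Nil then show ?case by simp
next
  case (Cons S Ls)
  show ?case
  proof (cases jj)
    case 0 then show ?thesis using Cons.prems by simp
  next
    case (Suc j)
    have "\<not> x < a + S" using Cons.prems Suc by simp
    moreover have "slotfind x (a + S) Ls (Suc k) = Suc k + j"
      using Cons.IH[of j "a + S" "Suc k"] Cons.prems Suc by (simp add: add.assoc)
    ultimately show ?thesis using Suc by simp
  qed
qed

lemma slotfind_out: "a + sum_list Ls \<le> x \<Longrightarrow> slotfind x a Ls k = 1"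
  by (induction Ls arbitrary: a k) auto



definition fields :: "nat \<Rightarrow> nat \<times> nat \<times> nat \<Rightarrow> rtree list \<Rightarrow> nat list" where
  "fields p st ts = [fst (snd st), snd (snd st) div 2^fst (snd st) - fst st div 2^fst (snd st) - 1]
     @ concat (map (\<lambda>q. [fst q, snd q]) (map (\<lambda>i. rnd p (A p (ts!i))) (lights ts)))"

definition lab :: "nat \<Rightarrow> nat \<times> nat \<times> nat \<Rightarrow> rtree \<Rightarrow> nat list \<Rightarrow> bool list" where
  "lab p st0 T u = (let st = walk p st0 T u in
     encl (fields p st (children (subtree_at T u))) @ bits (bitlen (fst st)) (fst st))"

definition pofn :: "nat \<Rightarrow> nat" where
  "pofn n = bitlen (nat \<lceil>log 2 (real n)\<rceil>) + 2"

definition st0 :: "nat \<Rightarrow> rtree \<Rightarrow> nat \<times> nat \<times> nat" where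
  "st0 p T = (0, fst (rnd p (A p T)), snd (rnd p (A p T)) * 2^fst (rnd p (A p T)))"

definition myport :: "rtree \<Rightarrow> nat list \<Rightarrow> nat \<Rightarrow> nat" where
  "myport T u i = Suc (idx (ord (children (subtree_at T u))) i)"

definition myenc :: encoder where
  "myenc T = (lab (pofn (tsize T)) (st0 (pofn (tsize T)) T) T, myport T)"

definition mydec :: decoder where
  "mydec k lu lw = (let fr = decl lu; fs = fst fr; idu = unbits (snd fr); idw = unbits (snd (decl lw));
     e = fs ! 0; d = fs ! 1; E = (idu div 2^e + 1 + d) * 2^e;
     sl = map (\<lambda>q. (snd q + 1) * 2^fst q - 1) (mkpairs (drop 2 fs))
   in if idu < idw \<and> idw < E then slotfind idw (idu + 1) sl 2 else 0)"

lemma st0_inv: "0 + A p T \<le> snd (snd (st0 p T)) \<and> snd (snd (st0 p T)) mod 2^fst (snd (st0 p T)) = 0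
   \<and> snd (snd (st0 p T)) \<le> 0 + 2^(p + fst (snd (st0 p T)))"
  using rnd_props[of p "A p T"] by (simp add: st0_def power_add)

lemma decode_E:
  fixes s E P :: nat
  assumes "s < E" "E mod P = 0" "0 < P"
  shows "(s div P + 1 + (E div P - s div P - 1)) * P = E"
proof -
  have "s div P * P \<le> s" by (rule div_times_less_eq_dividend)
  moreover have "E div P * P = E" using assms(2) by (metis div_mult_mod_eq add_0_right)
  ultimately have "s div P < E div P" using assms(1) by (metis le_less_trans mult_le_cancel2 not_less)
  hence "s div P + 1 + (E div P - s div P - 1) = E div P" by simp
  thus ?thesis using \<open>E div P * P = E\<close> by simp
qed

lemma port_props:
  assumes v: "valid_pos T u" and ts: "children (subtree_at T u) = ts" and i: "i < length ts"
  shows "(i = heavy ts \<longrightarrow> myport T u i = 1) \<and> (i \<noteq> heavy ts \<longrightarrow> myport T u i = Suc (Suc (idx (lights ts) i)))"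
proof -
  have ne: "ts \<noteq> []" using i by auto
  show ?thesis using ord_cons[OF ne] ts unfolding myport_def by auto
qed

lemma Ss_alt: "map (\<lambda>q. (snd q + 1) * 2^fst q - 1) (map (\<lambda>i. rnd p (A p (ts!i))) (lights ts)) = Ss p ts"
  by (simp add: Ss_def SL_def)

theorem route_correct:
  assumes u: "valid_pos T u" and w: "valid_pos T w" and uw: "u \<noteq> w"
  shows "mydec k (lab p (st0 p T) T u) (lab p (st0 p T) T w) = route (myport T) u w"
proof -
  define st where "st = st0 p T"
  obtain su eu Eu where wu: "walk p st T u = (su, eu, Eu)" by (metis prod.collapse)
  obtain ts where sub: "subtree_at T u = Node ts" by (cases "subtree_at T u")
  have ch: "children (subtree_at T u) = ts" using sub by simp
  have inv0: "0 + A p T \<le> snd (snd st)" "snd (snd st) mod 2^fst (snd st) = 0" "snd (snd st) \<le> 0 + 2^(p + fst (snd st))"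
    using st0_inv[of p T] unfolding st_def by auto
  have stf: "st = (0, fst (snd st), snd (snd st))" unfolding st_def st0_def by simp
  have I1: "su + A p (Node ts) \<le> Eu" using walk_inv[OF u, of 0 p "snd (snd st)" "fst (snd st)"] inv0 stf wu sub by simp
  have I2: "Eu mod 2^eu = 0" using walk_inv2[OF u, of 0 p "snd (snd st)" "fst (snd st)"] inv0 stf wu by simp
  have suE: "su < Eu" using I1 A_pos[of p "Node ts"] by simp
  have Edec: "(su div 2^eu + 1 + (Eu div 2^eu - su div 2^eu - 1)) * 2^eu = Eu"
    by (rule decode_E[OF suE I2]) simp
  obtain sw ew Ew where ww: "walk p st T w = (sw, ew, Ew)" by (metis prod.collapse)
  have lu: "lab p st T u = encl (fields p (su,eu,Eu) ts) @ bits (bitlen su) su"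
    unfolding lab_def using wu ch by simp
  have lw: "snd (decl (lab p st T w)) = bits (bitlen sw) sw"
    unfolding lab_def using ww by (simp add: Let_def decl_encl)
  have du: "decl (lab p st T u) = (fields p (su,eu,Eu) ts, bits (bitlen su) su)"
    unfolding lu by (rule decl_encl)
  have f0: "fields p (su,eu,Eu) ts ! 0 = eu" by (simp add: fields_def)
  have f1: "fields p (su,eu,Eu) ts ! 1 = Eu div 2^eu - su div 2^eu - 1" by (simp add: fields_def)
  have f2: "drop 2 (fields p (su,eu,Eu) ts) = concat (map (\<lambda>q. [fst q, snd q]) (map (\<lambda>i. rnd p (A p (ts!i))) (lights ts)))"
    by (simp add: fields_def)
  have sl: "map (\<lambda>q. (snd q + 1) * 2^fst q - 1) (mkpairs (drop 2 (fields p (su,eu,Eu) ts))) = Ss p ts"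
    unfolding f2 mkpairs_concat Ss_alt ..
  have dec_eq: "mydec k (lab p st T u) (lab p st T w) =
     (if su < sw \<and> sw < Eu then slotfind sw (su + 1) (Ss p ts) 2 else 0)"
    unfolding mydec_def Let_def du fst_conv snd_conv unbits_bitlen lw f0 f1 sl Edec ..
  show ?thesis
  proof (cases "strict_prefix u w")
    case True
    then obtain i v where wv: "w = u @ i # v"
      by (metis prefix_def strict_prefix_def self_append_conv neq_Nil_conv)
    have vw: "valid_pos (Node ts) (i # v)" using w wv valid_pos_append sub by metis
    have i: "i < length ts" and vv: "valid_pos (ts!i) v" using vw by auto
    have ne: "ts \<noteq> []" using i by auto
    obtain s' e' E' where c: "cst p (su,eu,Eu) ts i = (s',e',E')" by (metis prod.collapse)
    have ci: "s' + A p (ts!i) \<le> E' \<and> E' \<le> Eu \<and> su < s' \<and> s' = cstart p su ts i"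
      using cst_inv[OF i I1 c] .
    have wwe: "walk p st T w = walk p (s',e',E') (ts!i) v"
      using walk_append[OF u, of p st "i # v"] wv wu sub c by simp
    have swe: "sw = fst (walk p (s',e',E') (ts!i) v)" using wwe ww by (metis fst_conv)
    have rg: "s' \<le> sw \<and> sw < s' + A p (ts!i)" using region[OF vv, of s' p e' E'] swe by simp
    have cb: "cstart p su ts i + A p (ts!i) \<le> su + A p (Node ts)" using child_bounds[OF i] by simp
    have chk: "su < sw \<and> sw < Eu" using rg ci cb I1 by linarith
    have rt: "route (myport T) u w = myport T u i"
      unfolding route_def using True wv by simp
    show ?thesis
    proof (cases "i = heavy ts")
      case True
      have "su + 1 + sum_list (Ss p ts) \<le> sw" using heavy_child[OF ne, of p su eu Eu] ci rg True by simp
      then have "slotfind sw (su + 1) (Ss p ts) 2 = 1" by (rule slotfind_out)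
      then show ?thesis using dec_eq chk rt port_props[OF u ch i] True unfolding st_def by simp
    next
      case False
      note lc = light_child[OF i False, of p su eu Eu]
      define jj where "jj = idx (lights ts) i"
      have "slotfind sw (su + 1) (Ss p ts) 2 = 2 + jj"
        apply (rule slotfind_in)
        using lc rg ci c unfolding jj_def slotstart_def by (auto simp: length_Ss)
      then show ?thesis using dec_eq chk rt port_props[OF u ch i] False unfolding st_def jj_def by simp
    qed
  next
    case False
    have rt: "route (myport T) u w = 0" unfolding route_def using False by simp
    have n: "\<not> (su < sw \<and> sw < Eu)"
    proof
      assume h: "su < sw \<and> sw < Eu"
      have "prefix u w"
        using zone[OF u w, of 0 p "snd (snd st)" "fst (snd st)"] inv0 stf wu ww h by simp
      then show False using False uw by (simp add: strict_prefix_def)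
    qed
    show ?thesis unfolding st_def[symmetric] dec_eq rt using n by (simp only: if_False)
  qed
qed



lemma myport_canonical: "canonical_ports T (myport T)"
  unfolding canonical_ports_def port_assignment_def
proof (intro conjI ballI allI impI)
  fix u assume "u \<in> nodes T"
  obtain ts where sub: "subtree_at T u = Node ts" by (cases "subtree_at T u")
  have dg: "deg T u = length ts" unfolding deg_def sub by simp
  define \<sigma> where "\<sigma> = ord ts"
  have mp: "myport T u = (\<lambda>i. Suc (idx \<sigma> i))" unfolding myport_def sub \<sigma>_def by auto
  have sset: "set \<sigma> = {..<length ts}" "distinct \<sigma>" "length \<sigma> = length ts"
    unfolding \<sigma>_def using ord_set ord_distinct ord_length by auto
  show "bij_betw (myport T u) {..<deg T u} {1..deg T u}"
    unfolding bij_betw_def dg mp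
  proof
    show "inj_on (\<lambda>i. Suc (idx \<sigma> i)) {..<length ts}"
    proof (rule inj_onI)
      fix a b assume a: "a \<in> {..<length ts}" and b: "b \<in> {..<length ts}" and eq: "Suc (idx \<sigma> a) = Suc (idx \<sigma> b)"
      have "a = \<sigma> ! idx \<sigma> a" using idx_nth[of a \<sigma>] a sset(1) by simp
      also have "\<dots> = \<sigma> ! idx \<sigma> b" using eq by simp
      also have "\<dots> = b" using idx_nth[of b \<sigma>] b sset(1) by simp
      finally show "a = b" .
    qed
    show "(\<lambda>i. Suc (idx \<sigma> i)) ` {..<length ts} = {1..length ts}"
    proof
      show "(\<lambda>i. Suc (idx \<sigma> i)) ` {..<length ts} \<subseteq> {1..length ts}"
      proof
        fix y assume "y \<in> (\<lambda>i. Suc (idx \<sigma> i)) ` {..<length ts}"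
        then obtain a where a: "a < length ts" "y = Suc (idx \<sigma> a)" by auto
        have "idx \<sigma> a < length ts" using idx_nth[of a \<sigma>] a sset by simp
        then show "y \<in> {1..length ts}" using a by simp
      qed
      show "{1..length ts} \<subseteq> (\<lambda>i. Suc (idx \<sigma> i)) ` {..<length ts}"
      proof
        fix k assume k: "k \<in> {1..length ts}"
        then have k1: "k - 1 < length \<sigma>" using sset(3) k by auto
        have "\<sigma> ! (k - 1) \<in> set \<sigma>" by (rule nth_mem[OF k1])
        hence "\<sigma> ! (k - 1) \<in> {..<length ts}" using sset(1) by simp
        moreover have "k = (\<lambda>i. Suc (idx \<sigma> i)) (\<sigma> ! (k - 1))" using idx_of_nth[OF sset(2) k1] k by simp
        ultimately show "k \<in> (\<lambda>i. Suc (idx \<sigma> i)) ` {..<length ts}" by (intro image_eqI[where x="\<sigma> ! (k - 1)"])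
      qed
    qed
  qed
next
  fix u i j assume u: "u \<in> nodes T" and i: "i < deg T u" and j: "j < deg T u"
    and lt: "myport T u i < myport T u j"
  obtain ts where sub: "subtree_at T u = Node ts" by (cases "subtree_at T u")
  have dg: "deg T u = length ts" unfolding deg_def sub by simp
  define \<sigma> where "\<sigma> = ord ts"
  have sset: "set \<sigma> = {..<length ts}" "distinct \<sigma>" "length \<sigma> = length ts"
    unfolding \<sigma>_def using ord_set ord_distinct ord_length by auto
  have "i \<in> set \<sigma>" "j \<in> set \<sigma>" using sset(1) i j dg by simp_all
  hence ii: "idx \<sigma> i < length ts \<and> \<sigma> ! idx \<sigma> i = i" and jj: "idx \<sigma> j < length ts \<and> \<sigma> ! idx \<sigma> j = j"
    using idx_nth[of i \<sigma>] idx_nth[of j \<sigma>] sset(3) by simp_all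
  have "idx \<sigma> i < idx \<sigma> j" using lt unfolding myport_def sub \<sigma>_def by simp
  then have "tsz (ts ! j) \<le> tsz (ts ! i)" using ord_sorted[of "idx \<sigma> i" "idx \<sigma> j" ts] ii jj
    unfolding \<sigma>_def by simp
  moreover have "subtree_at T (u @ [j]) = ts ! j" "subtree_at T (u @ [i]) = ts ! i"
    using subtree_at_append[of T u "[j]"] subtree_at_append[of T u "[i]"] sub by simp_all
  ultimately show "tsize (subtree_at T (u @ [j])) \<le> tsize (subtree_at T (u @ [i]))"
    by (simp add: tsize_tsz)
qed

theorem myscheme_correct: "correct_on myenc mydec T"
proof -
  have r: "\<forall>u \<in> nodes T. \<forall>w \<in> nodes T. u \<noteq> w \<longrightarrow>
     mydec (nat \<lceil>log 2 (real (tsize T))\<rceil>) (lab (pofn (tsize T)) (st0 (pofn (tsize T)) T) T u)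
         (lab (pofn (tsize T)) (st0 (pofn (tsize T)) T) T w) = route (myport T) u w"
    using route_correct unfolding nodes_def by blast
  show ?thesis unfolding correct_on_def myenc_def Let_def fst_conv snd_conv
    using myport_canonical r by (rule conjI)
qed



lemma SL_real: "real (SL p x) \<le> real x * (1 + 4 / 2^p)"
proof -
  define e where "e = fst (rnd p x)"
  define M where "M = snd (rnd p x)"
  have r: "M \<le> 2^p" "x \<le> M * 2^e" "M * 2^e + 1 \<le> x + 2^e" "0 < e \<longrightarrow> 2^(p + e - 1) < x"
    using rnd_props[of p x] unfolding e_def M_def by auto
  have sl: "SL p x = (M+1) * 2^e - 1" unfolding SL_def e_def M_def by simp
  have one: "real x \<le> real x * (1 + 4 / 2^p)"
  proof -
    have "(1::real) \<le> 1 + 4 / 2^p" by simp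
    then show ?thesis using mult_left_mono[of 1 "1 + 4 / 2^p" "real x"] by simp
  qed
  show ?thesis
  proof (cases "e = 0")
    case True
    then have "SL p x \<le> x" using sl r by simp
    then show ?thesis using one by linarith
  next
    case False
    then obtain e' where e': "e = Suc e'" by (cases e) auto
    have "2^(p + e') < x" using r(4) e' by simp
    then have "(2::nat)^p * 2^e < 2 * x" using e' by (simp add: power_add)
    then have "real ((2::nat)^p * 2^e) < real (2 * x)" by (simp only: of_nat_less_iff)
    then have h: "(2::real)^p * 2^e < 2 * real x" by simp
    have "(M+1) * 2^e = M * 2^e + (2::nat)^e" by simp
    moreover have "(1::nat) \<le> 2^e" by simp
    ultimately have "SL p x + 2 \<le> x + 2 * 2^e" using sl r(3) by linarith
    then have "real (SL p x + 2) \<le> real (x + 2 * 2^e)" by (simp only: of_nat_le_iff)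
    then have s1: "real (SL p x) \<le> real x + 2 * 2^e" by simp
    have "2 * (2::real)^e \<le> 4 * real x / 2^p" using h by (simp add: field_simps)
    then have "real (SL p x) \<le> real x + 4 * real x / 2^p" using s1 by linarith
    also have "\<dots> = real x * (1 + 4 / 2^p)" by (simp add: algebra_simps)
    finally show ?thesis .
  qed
qed



lemma sum_heavy_lights:
  assumes "ts \<noteq> []"
  shows "tsz (ts ! heavy ts) + sum_list (map (\<lambda>i. tsz (ts!i)) (lights ts)) = sum_list (map tsz ts)"
proof -
  have "tsz (ts ! heavy ts) + sum_list (map (\<lambda>i. tsz (ts!i)) (lights ts)) = sum_list (map (\<lambda>i. tsz (ts!i)) (ord ts))"
    using ord_cons[OF assms] by simp
  also have "\<dots> = sum (\<lambda>i. tsz (ts!i)) {..<length ts}"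
    using sum_list_distinct_conv_sum_set[OF ord_distinct] ord_set by metis
  also have "\<dots> = sum_list (map tsz ts)"
    by (simp add: sum_list_sum_nth atLeast0LessThan)
  finally show ?thesis .
qed

lemma light_le_heavy:
  assumes "ts \<noteq> []" "i \<in> set (lights ts)"
  shows "tsz (ts ! i) \<le> tsz (ts ! heavy ts)"
proof -
  obtain jj where jj: "jj < length (lights ts)" "lights ts ! jj = i" using assms(2) by (metis in_set_conv_nth)
  have o: "ord ts ! Suc jj = i" "ord ts ! 0 = heavy ts" using ord_cons[OF assms(1)] jj by simp_all
  have "Suc jj < length ts" using jj ord_cons[OF assms(1)] ord_length[of ts] by (metis length_Cons not_less_eq)
  then show ?thesis using ord_sorted[of 0 "Suc jj" ts] o by simp
qed

lemma A_bound:
  "tsz t < 2^(Suc j) \<Longrightarrow> real (A p t) \<le> real (tsz t) * (1 + 4/2^p)^j"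
proof (induction t arbitrary: j)
  case (Node ts)
  define q :: real where "q = 1 + 4/2^p"
  have q1: "1 \<le> q" unfolding q_def by simp
  show ?case
  proof (cases "ts = []")
    case True
    then show ?thesis using q1 by (simp add: A.simps q_def[symmetric])
  next
    case ne: False
    define h where "h = heavy ts"
    define ls where "ls = lights ts"
    have hin: "ts ! h \<in> set ts" unfolding h_def using heavy_lt[OF ne] by simp
    have lin: "\<And>i. i \<in> set ls \<Longrightarrow> ts ! i \<in> set ts" unfolding ls_def using lights_set[OF ne] by auto
    have S: "tsz (ts ! h) + sum_list (map (\<lambda>i. tsz (ts!i)) ls) = sum_list (map tsz ts)"
      using sum_heavy_lights[OF ne] unfolding h_def ls_def .
    have N: "tsz (Node ts) = Suc (sum_list (map tsz ts))" by simp
    have pos: "1 \<le> tsz (ts ! h)" by (cases "ts ! h") simp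
    obtain j' where j': "j = Suc j'"
    proof (cases j)
      case 0
      then have "tsz (Node ts) < 2" using Node.prems by simp
      then show ?thesis using N S pos hin by fastforce
    next
      case (Suc j') then show ?thesis using that by simp
    qed
    have hb: "real (A p (ts ! h)) \<le> real (tsz (ts ! h)) * q^j"
      unfolding q_def by (rule Node.IH[OF hin]) (use Node.prems N S in simp)
    have lb: "real (SL p (A p (ts ! i))) \<le> real (tsz (ts ! i)) * q^j" if i: "i \<in> set ls" for i
    proof -
      have "tsz (ts ! i) \<le> tsz (ts ! h)" using light_le_heavy[OF ne] i unfolding h_def ls_def by simp
      moreover have "tsz (ts ! i) \<le> sum_list (map (\<lambda>i. tsz (ts!i)) ls)"
        using member_le_sum_list[of "tsz (ts!i)"] i by simp
      ultimately have "2 * tsz (ts ! i) < 2^Suc j" using Node.prems N S by linarith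
      then have "tsz (ts ! i) < 2^Suc j'" using j' by simp
      then have "real (A p (ts ! i)) \<le> real (tsz (ts ! i)) * q^j'"
        unfolding q_def by (rule Node.IH[OF lin[OF i]])
      then have "real (A p (ts ! i)) * q \<le> real (tsz (ts ! i)) * q^j' * q"
        using q1 by (intro mult_right_mono) auto
      moreover have "real (SL p (A p (ts ! i))) \<le> real (A p (ts ! i)) * q"
        using SL_real unfolding q_def by blast
      ultimately show ?thesis using j' by (simp add: mult.assoc mult.commute)
    qed
    have "real (A p (Node ts)) = 1 + sum_list (map (\<lambda>i. real (SL p (A p (ts ! i)))) ls) + real (A p (ts ! h))"
      using A_Node[OF ne, of p] unfolding Ss_def h_def ls_def by (simp add: sum_list_of_nat[symmetric] o_def)
    also have "\<dots> \<le> 1 + sum_list (map (\<lambda>i. real (tsz (ts ! i)) * q^j) ls) + real (tsz (ts ! h)) * q^j"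
    proof -
      have "sum_list (map (\<lambda>i. real (SL p (A p (ts ! i)))) ls) \<le> sum_list (map (\<lambda>i. real (tsz (ts ! i)) * q^j) ls)"
        by (rule sum_list_mono) (rule lb)
      then show ?thesis using hb by linarith
    qed
    also have "\<dots> = 1 + (real (sum_list (map (\<lambda>i. tsz (ts!i)) ls)) + real (tsz (ts ! h))) * q^j"
    proof -
      have a: "sum_list (map (\<lambda>i. real (tsz (ts ! i)) * q^j) ls) = sum_list (map (\<lambda>i. real (tsz (ts!i))) ls) * q^j"
        by (rule sum_list_mult_const)
      have b: "sum_list (map (\<lambda>i. real (tsz (ts!i))) ls) = real (sum_list (map (\<lambda>i. tsz (ts!i)) ls))"
        by (induction ls) auto
      show ?thesis unfolding a b by (simp add: distrib_right)
    qed
    also have "\<dots> \<le> q^j + (real (sum_list (map (\<lambda>i. tsz (ts!i)) ls)) + real (tsz (ts ! h))) * q^j"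
      using q1 by simp
    also have "\<dots> = real (tsz (Node ts)) * q^j"
    proof -
      have "real (tsz (Node ts)) = 1 + (real (sum_list (map (\<lambda>i. tsz (ts!i)) ls)) + real (tsz (ts ! h)))"
        using N S by simp
      then show ?thesis by (simp only: distrib_right mult_1)
    qed
    finally show ?thesis unfolding q_def .
  qed
qed


lemma pow_of_log: "(1::real) \<le> n \<Longrightarrow> log 2 n \<le> real k \<Longrightarrow> n \<le> 2^k"
  by (smt (verit, best) less_log_of_power)

lemma k_props:
  assumes "(1::real) \<le> n"
  shows "log 2 n \<le> real (nat \<lceil>log 2 n\<rceil>) \<and> real (nat \<lceil>log 2 n\<rceil>) < log 2 n + 1"
proof -
  have "0 \<le> log 2 n" using assms by simp
  then have "real (nat \<lceil>log 2 n\<rceil>) = real_of_int \<lceil>log 2 n\<rceil>" by simp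
  moreover have "log 2 n \<le> real_of_int \<lceil>log 2 n\<rceil>" by (rule le_of_int_ceiling)
  moreover have "real_of_int \<lceil>log 2 n\<rceil> < log 2 n + 1" using ceiling_correct[of "log 2 n"] by linarith
  ultimately show ?thesis by linarith
qed

lemma bitlen_low: "0 < x \<Longrightarrow> 2^(bitlen x - 1) \<le> x"
proof (induction x rule: less_induct)
  case (less x)
  show ?case
  proof (cases "x = 1")
    case True then show ?thesis by (simp add: bitlen.simps)
  next
    case False
    then have x2: "0 < x div 2" using less.prems by simp
    then have "2^(bitlen (x div 2) - 1) \<le> x div 2" using less.IH by simp
    moreover have "bitlen x = Suc (bitlen (x div 2))" using less.prems by (simp add: bitlen.simps[of x])
    moreover have "0 < bitlen (x div 2)" using x2 by (simp add: bitlen.simps[of "x div 2"])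
    ultimately show ?thesis by (cases "bitlen (x div 2)") auto
  qed
qed

lemma bitlen_log: "0 < x \<Longrightarrow> real (bitlen x) \<le> log 2 (real x) + 1"
proof -
  assume x: "0 < x"
  have "2^(bitlen x - 1) \<le> x" using bitlen_low[OF x] .
  then have "real (bitlen x - 1) \<le> log 2 (real x)" using le_log2_of_power by force
  then show ?thesis by linarith
qed

lemma bitlen_le_self: "bitlen x \<le> x"
proof (induction x rule: less_induct)
  case (less x)
  show ?case
  proof (cases "x = 0")
    case True then show ?thesis by (simp add: bitlen.simps)
  next
    case False
    then have "bitlen (x div 2) \<le> x div 2" using less.IH by simp
    then show ?thesis using False by (simp add: bitlen.simps[of x])
  qed
qed

lemma A_3n:
  assumes "tsz T \<le> 2^k"
  shows "real (A (bitlen k + 2) T) \<le> 3 * real (tsz T)"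
proof -
  define p where "p = bitlen k + 2"
  define x :: real where "x = 4 / 2^p"
  have x0: "0 \<le> x" unfolding x_def by simp
  have "(0::nat) < 2^k" by simp
  then have "tsz T < 2 * 2^k" using assms by linarith
  then have "tsz T < 2^Suc k" by simp
  then have a: "real (A p T) \<le> real (tsz T) * (1 + x)^k" unfolding x_def by (rule A_bound)
  have "(1 + x)^k \<le> exp x ^ k" using x0 by (intro power_mono) auto
  also have "\<dots> = exp (real k * x)" by (simp add: exp_of_nat_mult)
  also have "\<dots> \<le> exp 1"
  proof -
    have "k < 2^bitlen k" by (rule bitlen_lt)
    then have "real k < 2^bitlen k" by (metis of_nat_less_iff of_nat_numeral of_nat_power)
    moreover have "x = 1 / 2^bitlen k" unfolding x_def p_def by (simp add: power_add)
    ultimately have "real k * x = real k / 2^bitlen k" by simp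
    also have "\<dots> \<le> 1" using \<open>real k < 2^bitlen k\<close> by (simp add: divide_le_eq)
    finally have "real k * x \<le> 1" .
    then show ?thesis by simp
  qed
  also have "\<dots> \<le> 3" by (rule exp_le)
  finally have "(1 + x)^k \<le> 3" .
  then have "real (tsz T) * (1 + x)^k \<le> real (tsz T) * 3" by (intro mult_left_mono) auto
  then show ?thesis using a unfolding p_def by linarith
qed

lemma A_sub: "valid_pos t u \<Longrightarrow> A p (subtree_at t u) \<le> A p t"
proof (induction u arbitrary: t)
  case Nil then show ?case by simp
next
  case (Cons i u)
  obtain ts where t: "t = Node ts" by (cases t)
  have i: "i < length ts" and v: "valid_pos (ts!i) u" using Cons.prems t by auto
  have "A p (ts!i) \<le> A p t" using child_bounds[OF i, of 0 p] t by simp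
  then show ?case using Cons.IH[OF v] t by simp
qed

lemma rnd_e_bound:
  assumes "x < 2^(k+2)" "2 \<le> p"
  shows "fst (rnd p x) \<le> k + 2"
proof (rule ccontr)
  assume h: "\<not> fst (rnd p x) \<le> k + 2"
  then have "2^(p + fst (rnd p x) - 1) < x" using rnd_props[of p x] by simp
  moreover have "(2::nat)^(k+2) \<le> 2^(p + fst (rnd p x) - 1)" using h assms(2) by (intro power_increasing) auto
  ultimately show False using assms(1) by linarith
qed



lemma length_encl: "length (encl xs) = 2 * bitlen (length xs) + 1 + sum_list (map (\<lambda>v. 2 * bitlen v + 1) xs)"
proof -
  have "length (concat (map gam xs)) = sum_list (map (\<lambda>v. 2 * bitlen v + 1) xs)"
    by (induction xs) (auto simp: length_gam)
  then show ?thesis unfolding encl_def by (simp add: length_gam)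
qed

lemma encl_bound:
  assumes "\<forall>v\<in>set xs. v < 2^B" "length xs \<le> F"
  shows "length (encl xs) \<le> 2 * F + 1 + F * (2 * B + 1)"
proof -
  have "sum_list (map (\<lambda>v. 2 * bitlen v + 1) xs) \<le> sum_list (map (\<lambda>v. 2 * B + 1) xs)"
    using assms(1) bitlen_le by (intro sum_list_mono) auto
  also have "\<dots> = length xs * (2 * B + 1)" by (simp add: sum_list_triv)
  also have "\<dots> \<le> F * (2 * B + 1)" using assms(2) by (rule mult_right_mono) simp
  finally have a: "sum_list (map (\<lambda>v. 2 * bitlen v + 1) xs) \<le> F * (2 * B + 1)" .
  have "bitlen (length xs) \<le> F" using bitlen_le_self[of "length xs"] assms(2) by linarith
  then show ?thesis using a length_encl[of xs] by linarith
qed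

lemma walk_e:
  "valid_pos t u \<Longrightarrow> A p t \<le> X \<Longrightarrow> (\<exists>x \<le> X. e = fst (rnd p x)) \<Longrightarrow>
    \<exists>x \<le> X. fst (snd (walk p (s,e,E) t u)) = fst (rnd p x)"
proof (induction u arbitrary: t s e E)
  case Nil then show ?case by simp
next
  case (Cons i u)
  obtain ts where t: "t = Node ts" by (cases t)
  have i: "i < length ts" and v: "valid_pos (ts!i) u" using Cons.prems t by auto
  obtain s' e' E' where c: "cst p (s,e,E) ts i = (s',e',E')" by (metis prod.collapse)
  have Ai: "A p (ts!i) \<le> X" using child_bounds[OF i, of 0 p] Cons.prems(2) t by simp
  have "\<exists>x \<le> X. e' = fst (rnd p x)"
  proof (cases "i = heavy ts")
    case True then show ?thesis using c Cons.prems(3) by (simp add: cst_def Let_def)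
  next
    case False then show ?thesis using c Ai by (auto simp: cst_def Let_def)
  qed
  then show ?case using Cons.IH[OF v Ai] t c by simp
qed

lemma lab_length:
  assumes bd: "bounded_deg \<Delta> T" and u: "u \<in> nodes T" and nk: "tsz T \<le> 2^k"
  shows "length (lab (bitlen k + 2) (st0 (bitlen k + 2) T) T u)
     \<le> 2 * (2 + 2 * \<Delta>) + 1 + (2 + 2 * \<Delta>) * (2 * (bitlen k + 3) + 1) + (k + 2)"
proof -
  define p where "p = bitlen k + 2"
  define st where "st = st0 p T"
  have vu: "valid_pos T u" using u by (simp add: nodes_def)
  obtain su eu Eu where wu: "walk p st T u = (su, eu, Eu)" by (metis prod.collapse)
  obtain ts where sub: "subtree_at T u = Node ts" by (cases "subtree_at T u")
  have dg: "length ts \<le> \<Delta>" using bd u sub unfolding bounded_deg_def deg_def by force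
  have "real (A p T) \<le> 3 * real (tsz T)" unfolding p_def by (rule A_3n[OF nk])
  then have "A p T \<le> 3 * tsz T" by linarith
  also have "\<dots> < 2^(k+2)"
  proof -
    have "(0::nat) < 2^k" by simp
    then have "3 * tsz T < 4 * 2^k" using nk by linarith
    then show ?thesis by (simp add: power_add)
  qed
  finally have AT: "A p T < 2^(k+2)" .
  have kB: "k + 2 < 2^(p+1)"
  proof -
    have "k < 2^bitlen k" by (rule bitlen_lt)
    moreover have "(1::nat) \<le> 2^bitlen k" by simp
    ultimately show ?thesis unfolding p_def by simp
  qed
  have inv0: "0 + A p T \<le> snd (snd st)" "snd (snd st) mod 2^fst (snd st) = 0" "snd (snd st) \<le> 0 + 2^(p + fst (snd st))"
    using st0_inv[of p T] unfolding st_def by auto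
  have stf: "st = (0, fst (snd st), snd (snd st))" unfolding st_def st0_def by simp
  have e0: "\<exists>x \<le> A p T. fst (snd st) = fst (rnd p x)" unfolding st_def st0_def by auto
  obtain x where x: "x \<le> A p T" "eu = fst (rnd p x)"
    using walk_e[OF vu le_refl e0, of 0 "snd (snd st)"] stf wu by (metis fst_conv snd_conv)
  have p2: "2 \<le> p" unfolding p_def by simp
  have eu: "eu \<le> k + 2" using rnd_e_bound[of x k p] x AT p2 by simp
  have I2: "Eu \<le> su + 2^(p + eu)" using walk_inv2[OF vu, of 0 p "snd (snd st)" "fst (snd st)"] inv0 stf wu by simp
  have "Eu \<le> su + 2^p * 2^eu" using I2 by (simp add: power_add)
  then have "Eu div 2^eu \<le> (su + 2^p * 2^eu) div 2^eu" by (rule div_le_mono)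
  also have "\<dots> = 2^p + su div 2^eu" by (rule div_mult_self1) simp
  also have "\<dots> = su div 2^eu + 2^p" by simp
  finally have dd: "Eu div 2^eu \<le> su div 2^eu + 2^p" .
  have "(0::nat) < 2^p" by simp
  then have "Eu div 2^eu - su div 2^eu - 1 < 2 * 2^p" using dd by linarith
  then have d: "Eu div 2^eu - su div 2^eu - 1 < 2^(p+1)" by simp
  have su: "su < A p T" using region[OF vu, of 0 p "fst (snd st)" "snd (snd st)"] stf wu by (metis fst_conv add_0)
  have bsu: "bitlen su \<le> k + 2" using su AT by (intro bitlen_le) simp
  have lts: "\<forall>i\<in>set (lights ts). fst (rnd p (A p (ts!i))) < 2^(p+1) \<and> snd (rnd p (A p (ts!i))) < 2^(p+1)"
  proof
    fix i assume i: "i \<in> set (lights ts)"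
    have ne: "ts \<noteq> []" using i by (auto simp: lights_def ord_def)
    have il: "i < length ts" using i lights_set[OF ne] by auto
    have "A p (ts!i) \<le> A p (Node ts)" using child_bounds[OF il, of 0 p] by simp
    also have "\<dots> \<le> A p T" using A_sub[OF vu, of p] sub by simp
    finally have "A p (ts!i) < 2^(k+2)" using AT by simp
    then have "fst (rnd p (A p (ts!i))) \<le> k + 2" using rnd_e_bound p2 by blast
    moreover have "snd (rnd p (A p (ts!i))) \<le> 2^p" using rnd_props by blast
    moreover have "(2::nat)^p < 2^(p+1)" by simp
    ultimately show "fst (rnd p (A p (ts!i))) < 2^(p+1) \<and> snd (rnd p (A p (ts!i))) < 2^(p+1)" using kB by linarith
  qed
  have fb: "\<forall>v\<in>set (fields p (su,eu,Eu) ts). v < 2^(p+1)"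
    using lts eu kB d unfolding fields_def by auto
  have "length (lights ts) \<le> length ts" by (simp add: lights_def ord_length)
  then have fl: "length (fields p (su,eu,Eu) ts) \<le> 2 + 2 * \<Delta>" using dg
    unfolding fields_def by (simp add: length_concat o_def sum_list_triv)
  have "length (lab p st T u) = length (encl (fields p (su,eu,Eu) ts)) + bitlen su"
    unfolding lab_def using wu sub by simp
  also have "\<dots> \<le> 2 * (2 + 2 * \<Delta>) + 1 + (2 + 2 * \<Delta>) * (2 * (p + 1) + 1) + (k + 2)"
    using encl_bound[OF fb fl] bsu by linarith
  finally show ?thesis unfolding p_def st_def by (simp add: algebra_simps)
qed



lemma real_bound:
  fixes L1 :: real and k bl F :: nat and len :: nat
  assumes L1: "2 \<le> L1" and k: "real k < L1 + 1" "L1 \<le> real k"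
    and bl: "real bl \<le> log 2 (real k) + 1"
    and len: "len \<le> 2 * F + 1 + F * (2 * (bl + 3) + 1) + (k + 2)"
  shows "real len \<le> L1 + real (4 + 15 * F) * log 2 L1"
proof -
  define L2 where "L2 = log 2 L1"
  have L2: "1 \<le> L2" unfolding L2_def using L1 by simp
  have kpos: "0 < real k" using k L1 by linarith
  have "real k \<le> 2 * L1" using k L1 by linarith
  then have "log 2 (real k) \<le> log 2 (2 * L1)" using kpos by simp
  also have "\<dots> = 1 + L2" unfolding L2_def using L1 by (simp add: log_mult)
  finally have blb: "real bl \<le> 2 + L2" using bl by linarith
  have "real len \<le> 2 * real F + 1 + real F * (2 * (real bl + 3) + 1) + (real k + 2)"
  proof -
    have "real len \<le> real (2 * F + 1 + F * (2 * (bl + 3) + 1) + (k + 2))" using len by (simp only: of_nat_le_iff)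
    then show ?thesis by simp
  qed
  also have "\<dots> \<le> 2 * real F + 1 + real F * (2 * (2 + L2 + 3) + 1) + (L1 + 1 + 2)"
    using blb k by (intro add_mono mult_left_mono) auto
  also have "\<dots> = L1 + (4 + 13 * real F) + 2 * real F * L2" by (simp add: algebra_simps)
  also have "\<dots> \<le> L1 + (4 + 13 * real F) * L2 + 2 * real F * L2"
    using L2 by (intro add_mono) (auto intro: mult_left_mono[of 1 L2, simplified])
  also have "\<dots> \<le> L1 + real (4 + 15 * F) * L2"
    using L2 by (simp add: algebra_simps)
  finally show ?thesis unfolding L2_def .
qed

theorem mainTheorem1:
  fixes \<Delta> :: nat
  assumes "\<Delta> \<ge> 1"
  shows "\<exists>(enc :: encoder) (dec :: decoder) (c :: real) (N0 :: nat).
           (\<forall>t. bounded_deg \<Delta> t \<longrightarrow> correct_on enc dec t) \<and>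
           (\<forall>t. bounded_deg \<Delta> t \<longrightarrow> tsize t \<ge> N0 \<longrightarrow>
              (\<forall>u \<in> nodes t. real (length (fst (enc t) u))
                  \<le> log 2 (real (tsize t)) + c * log 2 (log 2 (real (tsize t)))))"
proof -
  define F where "F = 2 + 2 * \<Delta>"
  have main: "\<forall>t. bounded_deg \<Delta> t \<longrightarrow> tsize t \<ge> 4 \<longrightarrow>
              (\<forall>u \<in> nodes t. real (length (fst (myenc t) u))
                  \<le> log 2 (real (tsize t)) + real (4 + 15 * F) * log 2 (log 2 (real (tsize t))))"
  proof (intro allI impI ballI)
    fix t u assume bd: "bounded_deg \<Delta> t" and n4: "4 \<le> tsize t" and u: "u \<in> nodes t"
    define n where "n = tsize t"
    define k where "k = nat \<lceil>log 2 (real n)\<rceil>"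
    have n1: "(1::real) \<le> real n" using n4 unfolding n_def by simp
    have kp: "log 2 (real n) \<le> real k \<and> real k < log 2 (real n) + 1" unfolding k_def by (rule k_props[OF n1])
    have "real n \<le> 2^k" using pow_of_log[OF n1] kp by simp
    then have "real n \<le> real ((2::nat)^k)" by simp
    then have nk: "tsz t \<le> 2^k" unfolding n_def tsize_tsz by (simp only: of_nat_le_iff)
    have pf: "pofn n = bitlen k + 2" unfolding pofn_def k_def ..
    have L: "length (fst (myenc t) u) \<le> 2 * F + 1 + F * (2 * (bitlen k + 3) + 1) + (k + 2)"
      using lab_length[OF bd u nk] unfolding myenc_def F_def n_def[symmetric] pf by simp
    have L1: "2 \<le> log 2 (real n)"
    proof -
      have "log 2 4 \<le> log 2 (real n)" using n4 unfolding n_def by simp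
      moreover have "log 2 (4::real) = 2" using log_pow_cancel[of "2::real" 2] by simp
      ultimately show ?thesis by simp
    qed
    have kpos: "0 < k" using kp L1 by linarith
    have bl: "real (bitlen k) \<le> log 2 (real k) + 1" using bitlen_log[OF kpos] .
    show "real (length (fst (myenc t) u)) \<le> log 2 (real (tsize t)) + real (4 + 15 * F) * log 2 (log 2 (real (tsize t)))"
      using real_bound[OF L1 _ _ bl L] kp unfolding n_def by simp
  qed
  show ?thesis
    apply (rule exI[of _ myenc], rule exI[of _ mydec], rule exI[of _ "real (4 + 15 * F)"], rule exI[of _ 4])
    using myscheme_correct main by blast
qed


end
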